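(* Let $\mu$ be a strict partition. Then $$M\,\mathcal Q(\mu,\mu+(1))=\mathcal Q(\mu,\overline{\mu})\quad\text{and}\quad N\,\mathcal Q(\mu,\mu+(1))=\mathcal Q(\overline{\mu},\overline{\mu}+(1)).$$ Moreover, for any $\beta\in\mathcal Q(\mu,\overline\mu)$ (respectively $\beta\in\mathcal Q(\overline\mu,\overline\mu+(1))$) there is a unique $\alpha\in\mathcal Q(\mu,\mu+(1))$ with $\beta\in M(\alpha)$ (respectively $\beta\in N(\alpha)$).
   Context: Partitions are weakly decreasing sequences of nonnegative integers with finitely many nonzero parts, identified with Ferrers boards. $\alpha$ contains $\mu$ if deleting some rows and some columns of the Ferrers board of $\alpha$ and top/left-justifying yields $\mu$; otherwise $\alpha$ avoids $\mu$. Strict: positive parts distinct. $\alpha+\beta=(\alpha_1+\beta_1,\alpha_2+\beta_2,\ldots)$; $(w^m)$ is the partition with $m$ parts equal to $w$. $m(\alpha)$ is the multiplicity of the largest part of $\alpha$. $\mathcal Q(\tau,\mu)$ is the set of partitions of positive weight containing $\tau$ and avoiding $\mu$. For a partition $\mu$, $\overline\mu=(\mu_1+1,\mu_1,\mu_2,\ldots)$. For a partition $\alpha$: $M(\alpha)=\{\alpha+(w^{m(\alpha)}):w\ge0\}$ and $N(\alpha)=\{\alpha+(w^{m(\alpha)})+(1^c):w\ge0,\ 0<c<m(\alpha)\}$; for a set $S$ of partitions, $MS=\bigcup_{\alpha\in S}M(\alpha)$ and $NS=\bigcup_{\alpha\in S}N(\alpha)$. *)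

theory Defs
  imports Main
begin

definition is_partition :: "nat list \<Rightarrow> bool" where
  "is_partition xs \<longleftrightarrow> sorted_wrt (\<ge>) xs \<and> (\<forall>x\<in>set xs. 0 < x)"

definition strict_partition :: "nat list \<Rightarrow> bool" where
  "strict_partition xs \<longleftrightarrow> is_partition xs \<and> sorted_wrt (>) xs"

definition weight :: "nat list \<Rightarrow> nat" where
  "weight xs = sum_list xs"

definition part :: "nat list \<Rightarrow> nat \<Rightarrow> nat" where
  "part xs i = (if i < length xs then xs ! i else 0)"

definition ferrers :: "nat list \<Rightarrow> (nat \<times> nat) set" where
  "ferrers xs = {(i, j). i < length xs \<and> j < xs ! i}"

text \<open>alpha contains mu: keep rows R and columns C of the Ferrers board of alpha,
  then top/left-justify (renumber kept rows/columns in order); the result is the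
  Ferrers board of mu.\<close>
definition contains :: "nat list \<Rightarrow> nat list \<Rightarrow> bool" where
  "contains \<alpha> \<mu> \<longleftrightarrow> (\<exists>R C :: nat set.
     ferrers \<mu> = (\<lambda>(i, j). (card {r\<in>R. r < i}, card {c\<in>C. c < j})) ` (ferrers \<alpha> \<inter> (R \<times> C)))"

text \<open>Componentwise sum of partitions (zero parts dropped to stay canonical).\<close>
definition padd :: "nat list \<Rightarrow> nat list \<Rightarrow> nat list" where
  "padd xs ys = filter (\<lambda>x. 0 < x)
     (map (\<lambda>i. part xs i + part ys i) [0..<max (length xs) (length ys)])"

definition mlp :: "nat list \<Rightarrow> nat" where
  "mlp \<alpha> = (if \<alpha> = [] then 0 else length (filter (\<lambda>x. x = hd \<alpha>) \<alpha>))"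

definition Q :: "nat list \<Rightarrow> nat list \<Rightarrow> nat list set" where
  "Q \<tau> \<mu> = {\<alpha>. is_partition \<alpha> \<and> 0 < weight \<alpha> \<and> contains \<alpha> \<tau> \<and> \<not> contains \<alpha> \<mu>}"

definition pbar :: "nat list \<Rightarrow> nat list" where
  "pbar \<mu> = filter (\<lambda>x. 0 < x) ((part \<mu> 0 + 1) # \<mu>)"

definition Mset :: "nat list \<Rightarrow> nat list set" where
  "Mset \<alpha> = {padd \<alpha> (replicate (mlp \<alpha>) w) | w. True}"

definition Nset :: "nat list \<Rightarrow> nat list set" where
  "Nset \<alpha> = {padd (padd \<alpha> (replicate (mlp \<alpha>) w)) (replicate c 1) | w c. 0 < c \<and> c < mlp \<alpha>}"

definition MS :: "nat list set \<Rightarrow> nat list set" where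
  "MS S = (\<Union>\<alpha>\<in>S. Mset \<alpha>)"

definition NS :: "nat list set \<Rightarrow> nat list set" where
  "NS S = (\<Union>\<alpha>\<in>S. Nset \<alpha>)"

end

theory Submission
  imports Defs
begin

definition rk :: "nat set \<Rightarrow> nat \<Rightarrow> nat" where
  "rk X i = card {r\<in>X. r < i}"

lemma rk_fin: "finite {r\<in>X. r < (i::nat)}"
  by (rule finite_subset[of _ "{..<i}"]) auto

lemma rk_strict: "i1 \<in> R \<Longrightarrow> i1 < i2 \<Longrightarrow> rk R i1 < rk R i2"
  unfolding rk_def
  by (rule psubset_card_mono[OF rk_fin]) auto

lemma rk_mono: "i1 \<le> i2 \<Longrightarrow> rk R i1 \<le> rk R i2"
  unfolding rk_def
  by (rule card_mono[OF rk_fin]) auto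

lemma rk_le: "rk C x \<le> x"
  unfolding rk_def
  using card_mono[of "{..<x}" "{c\<in>C. c < x}"] by auto

lemma rk_diff: "y \<le> x \<Longrightarrow> rk C x + y \<le> rk C y + x"
proof -
  assume "y \<le> x"
  have "{c\<in>C. c < x} \<subseteq> {c\<in>C. c < y} \<union> {y..<x}" by auto
  hence "rk C x \<le> card ({c\<in>C. c < y} \<union> {y..<x})"
    unfolding rk_def by (intro card_mono) (auto intro: rk_fin)
  also have "\<dots> \<le> rk C y + card {y..<x}" unfolding rk_def by (rule card_Un_le)
  finally show ?thesis using \<open>y \<le> x\<close> by simp
qed

lemma rk_inj: "inj_on (rk A) A"
proof (rule inj_onI)
  fix a b assume "a \<in> A" "b \<in> A" "rk A a = rk A b"
  thus "a = b" using rk_strict[of a A b] rk_strict[of b A a]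
    by (cases a b rule: linorder_cases) auto
qed

lemma rk_image: "finite A \<Longrightarrow> rk A ` A = {..<card A}"
proof -
  assume f: "finite A"
  have sub: "rk A ` A \<subseteq> {..<card A}"
  proof
    fix y assume "y \<in> rk A ` A"
    then obtain a where a: "a \<in> A" "y = rk A a" by auto
    have "{r\<in>A. r < a} \<subset> A" using a by auto
    hence "card {r\<in>A. r < a} < card A" using f by (rule psubset_card_mono[rotated])
    thus "y \<in> {..<card A}" using a unfolding rk_def by auto
  qed
  have "card (rk A ` A) = card A" using rk_inj card_image by blast
  thus ?thesis using sub by (intro card_subset_eq) auto
qed

lemma img_iff:
  "((p, j) \<in> (\<lambda>(i, j). (card {r\<in>R. r < i}, card {c\<in>C. c < j})) ` (ferrers \<alpha> \<inter> (R \<times> C)))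
   \<longleftrightarrow> (\<exists>i\<in>R. i < length \<alpha> \<and> p = rk R i \<and> j < rk C (\<alpha> ! i))"
proof
  assume "(p, j) \<in> (\<lambda>(i, j). (card {r\<in>R. r < i}, card {c\<in>C. c < j})) ` (ferrers \<alpha> \<inter> (R \<times> C))"
  then obtain i c where ic: "i \<in> R" "c \<in> C" "i < length \<alpha>" "c < \<alpha> ! i" "p = rk R i" "j = rk C c"
    unfolding ferrers_def rk_def by auto
  thus "\<exists>i\<in>R. i < length \<alpha> \<and> p = rk R i \<and> j < rk C (\<alpha> ! i)"
    using rk_strict[of c C "\<alpha> ! i"] by auto
next
  assume "\<exists>i\<in>R. i < length \<alpha> \<and> p = rk R i \<and> j < rk C (\<alpha> ! i)"
  then obtain i where i: "i \<in> R" "i < length \<alpha>" "p = rk R i" "j < rk C (\<alpha> ! i)" by auto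
  define A where "A = {c\<in>C. c < \<alpha> ! i}"
  have "j \<in> rk A ` A" using i rk_image[of A] rk_fin[of C "\<alpha> ! i"]
    unfolding A_def rk_def by auto
  then obtain c where c: "c \<in> A" "j = rk A c" by auto
  have "rk A c = rk C c" using c unfolding A_def rk_def by (intro arg_cong[where f=card]) auto
  hence "(i, c) \<in> ferrers \<alpha> \<inter> (R \<times> C)" "(p, j) = (card {r\<in>R. r < i}, card {c'\<in>C. c' < c})"
    using c i unfolding ferrers_def A_def rk_def by auto
  thus "(p, j) \<in> (\<lambda>(i, j). (card {r\<in>R. r < i}, card {c\<in>C. c < j})) ` (ferrers \<alpha> \<inter> (R \<times> C))"
    by force
qed


fun ch :: "nat set \<Rightarrow> nat list \<Rightarrow> nat \<Rightarrow> nat \<Rightarrow> bool" where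
  "ch S [] x q = (q \<le> x)"
| "ch S (n # \<nu>) x q = (\<exists>a\<in>S. a + q \<le> x + n \<and> ch S \<nu> a n)"

lemma part_Cons0[simp]: "part (x # xs) 0 = x" by (simp add: part_def)
lemma part_ConsS[simp]: "part (x # xs) (Suc i) = part xs i" by (simp add: part_def)
lemma part_Nil[simp]: "part [] i = 0" by (simp add: part_def)

lemma chI:
  "(\<forall>p. 1 \<le> p \<and> p \<le> length \<nu> \<longrightarrow> A p \<in> S) \<Longrightarrow> A (Suc (length \<nu>)) = 0 \<Longrightarrow>
   (\<forall>p\<le>length \<nu>. A (Suc p) + part (q # \<nu>) p \<le> A p + part (q # \<nu>) (Suc p)) \<Longrightarrow> ch S \<nu> (A 0) q"
proof (induction \<nu> arbitrary: A q)
  case Nil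
  then show ?case using Nil(3)[rule_format, of 0] by simp
next
  case (Cons n \<nu>)
  have "ch S \<nu> ((\<lambda>p. A (Suc p)) 0) n"
  proof (rule Cons.IH)
    show "\<forall>p. 1 \<le> p \<and> p \<le> length \<nu> \<longrightarrow> A (Suc p) \<in> S" using Cons.prems(1) by auto
    show "A (Suc (Suc (length \<nu>))) = 0" using Cons.prems(2) by simp
    show "\<forall>p\<le>length \<nu>. A (Suc (Suc p)) + part (n # \<nu>) p \<le> A (Suc p) + part (n # \<nu>) (Suc p)"
      using Cons.prems(3) by (metis Suc_le_mono length_Cons part_ConsS)
  qed
  moreover have "A 1 \<in> S" using Cons.prems(1) by auto
  moreover have "A 1 + q \<le> A 0 + n" using Cons.prems(3)[rule_format, of 0] by simp
  ultimately show ?case by auto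
qed

lemma chE:
  "ch S \<nu> x q \<Longrightarrow> \<exists>A. A 0 = x \<and> (\<forall>p. 1 \<le> p \<and> p \<le> length \<nu> \<longrightarrow> A p \<in> S) \<and> A (Suc (length \<nu>)) = 0 \<and>
   (\<forall>p\<le>length \<nu>. A (Suc p) + part (q # \<nu>) p \<le> A p + part (q # \<nu>) (Suc p))"
proof (induction \<nu> arbitrary: x q)
  case Nil
  then show ?case by (intro exI[of _ "\<lambda>p. if p = 0 then x else 0"]) auto
next
  case (Cons n \<nu>)
  then obtain a where a: "a \<in> S" "a + q \<le> x + n" "ch S \<nu> a n" by auto
  from Cons.IH[OF a(3)] obtain A where A: "A 0 = a" "\<forall>p. 1 \<le> p \<and> p \<le> length \<nu> \<longrightarrow> A p \<in> S"
    "A (Suc (length \<nu>)) = 0" "\<forall>p\<le>length \<nu>. A (Suc p) + part (n # \<nu>) p \<le> A p + part (n # \<nu>) (Suc p)"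
    by blast
  define B where "B p = (if p = 0 then x else A (p - 1))" for p
  have "\<forall>p\<le>length (n # \<nu>). B (Suc p) + part (q # n # \<nu>) p \<le> B p + part (q # n # \<nu>) (Suc p)"
  proof (intro allI impI)
    fix p assume "p \<le> length (n # \<nu>)"
    show "B (Suc p) + part (q # n # \<nu>) p \<le> B p + part (q # n # \<nu>) (Suc p)"
    proof (cases p)
      case 0 then show ?thesis using a A by (simp add: B_def)
    next
      case (Suc p') then show ?thesis using A(4) \<open>p \<le> length (n # \<nu>)\<close> by (simp add: B_def)
    qed
  qed
  moreover have "\<forall>p. 1 \<le> p \<and> p \<le> length (n # \<nu>) \<longrightarrow> B p \<in> S"
  proof (intro allI impI)
    fix p assume p: "1 \<le> p \<and> p \<le> length (n # \<nu>)"
    show "B p \<in> S"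
    proof (cases "p = 1")
      case True then show ?thesis using a A by (simp add: B_def)
    next
      case False
      hence "1 \<le> p - 1 \<and> p - 1 \<le> length \<nu>" using p by auto
      then show ?thesis using A(2) p False by (simp add: B_def)
    qed
  qed
  moreover have "B 0 = x" "B (Suc (length (n # \<nu>))) = 0" using A by (auto simp: B_def)
  ultimately show ?case by blast
qed


lemma contains_iff_rk:
  "contains \<alpha> \<mu> \<longleftrightarrow> (\<exists>R C. \<forall>p j. (p, j) \<in> ferrers \<mu> \<longleftrightarrow> (\<exists>i\<in>R. i < length \<alpha> \<and> p = rk R i \<and> j < rk C (\<alpha> ! i)))"
  unfolding contains_def set_eq_iff split_paired_All img_iff by (rule refl)

lemma sorted_ge_nth: "sorted_wrt (\<ge>) (xs::nat list) \<Longrightarrow> i \<le> j \<Longrightarrow> j < length xs \<Longrightarrow> xs ! j \<le> xs ! i"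
  by (metis le_neq_implies_less order_refl sorted_wrt_nth_less)

lemma contains_imp_ch:
  assumes pa: "is_partition \<alpha>" and pm: "is_partition (m # \<nu>)" and c: "contains \<alpha> (m # \<nu>)"
  shows "\<exists>x\<in>set \<alpha>. ch (set \<alpha>) \<nu> x m"
proof -
  define \<mu> where "\<mu> = m # \<nu>"
  define k where "k = length \<mu>"
  from c obtain R C where RC: "\<And>p j. (p, j) \<in> ferrers \<mu> \<longleftrightarrow> (\<exists>i\<in>R. i < length \<alpha> \<and> p = rk R i \<and> j < rk C (\<alpha> ! i))"
    unfolding contains_iff_rk \<mu>_def by blast
  have pos: "p < k \<Longrightarrow> 0 < \<mu> ! p" for p using pm nth_mem[of p \<mu>] unfolding is_partition_def \<mu>_def k_def by auto
  have "\<forall>p\<in>{..<k}. \<exists>i. i \<in> R \<and> i < length \<alpha> \<and> p = rk R i"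
  proof
    fix p assume "p \<in> {..<k}"
    hence "(p, 0) \<in> ferrers \<mu>" using pos unfolding ferrers_def k_def by auto
    thus "\<exists>i. i \<in> R \<and> i < length \<alpha> \<and> p = rk R i" using RC by blast
  qed
  then obtain I where I: "\<And>p. p < k \<Longrightarrow> I p \<in> R \<and> I p < length \<alpha> \<and> p = rk R (I p)"
    using bchoice[of "{..<k}"] by (metis lessThan_iff)
  have rkeq: "rk C (\<alpha> ! I p) = \<mu> ! p" if "p < k" for p
  proof -
    have "j < \<mu> ! p \<longleftrightarrow> j < rk C (\<alpha> ! I p)" for j
    proof -
      have "j < \<mu> ! p \<longleftrightarrow> (p, j) \<in> ferrers \<mu>" using that unfolding ferrers_def k_def by auto
      also have "\<dots> \<longleftrightarrow> (\<exists>i\<in>R. i < length \<alpha> \<and> p = rk R i \<and> j < rk C (\<alpha> ! i))" by (rule RC)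
      also have "\<dots> \<longleftrightarrow> j < rk C (\<alpha> ! I p)"
      proof
        assume "\<exists>i\<in>R. i < length \<alpha> \<and> p = rk R i \<and> j < rk C (\<alpha> ! i)"
        then obtain i where i: "i \<in> R" "p = rk R i" "j < rk C (\<alpha> ! i)" by blast
        have "i = I p" using rk_inj[of R] i I[OF that] by (metis inj_on_def)
        thus "j < rk C (\<alpha> ! I p)" using i by simp
      qed (use I[OF that] in blast)
      finally show ?thesis .
    qed
    thus ?thesis by (metis less_irrefl linorder_neqE_nat)
  qed
  have Imono: "I p < I q" if "p < q" "q < k" for p q
  proof (rule ccontr)
    assume "\<not> I p < I q"
    hence "rk R (I q) \<le> rk R (I p)" by (intro rk_mono) auto
    thus False using I[of p] I[of q] that by auto
  qed
  define A where "A p = (if p < k then \<alpha> ! I p else 0)" for p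
  have Adec: "A (Suc p) \<le> A p" if "Suc p < k" for p
    using Imono[of p "Suc p"] that I[of "Suc p"] pa unfolding A_def is_partition_def
    by (auto intro!: sorted_ge_nth)
  have "ch (set \<alpha>) \<nu> (A 0) m"
  proof (rule chI)
    show "\<forall>p. 1 \<le> p \<and> p \<le> length \<nu> \<longrightarrow> A p \<in> set \<alpha>"
      using I unfolding A_def k_def \<mu>_def by auto
    show "A (Suc (length \<nu>)) = 0" unfolding A_def k_def \<mu>_def by simp
    show "\<forall>p\<le>length \<nu>. A (Suc p) + part (m # \<nu>) p \<le> A p + part (m # \<nu>) (Suc p)"
    proof (intro allI impI)
      fix p assume p: "p \<le> length \<nu>"
      hence pk: "p < k" unfolding k_def \<mu>_def by simp
      have pp: "part (m # \<nu>) p = rk C (A p)" using rkeq[OF pk] pk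
        unfolding A_def part_def \<mu>_def k_def by simp
      show "A (Suc p) + part (m # \<nu>) p \<le> A p + part (m # \<nu>) (Suc p)"
      proof (cases "Suc p < k")
        case True
        have "part (m # \<nu>) (Suc p) = rk C (A (Suc p))" using rkeq[OF True] True
          unfolding A_def part_def \<mu>_def k_def by simp
        thus ?thesis using pp rk_diff[OF Adec[OF True], of C] by simp
      next
        case False
        hence "A (Suc p) = 0" "part (m # \<nu>) (Suc p) = 0"
          unfolding A_def part_def \<mu>_def k_def by auto
        thus ?thesis using pp rk_le by simp
      qed
    qed
  qed
  moreover have "A 0 \<in> set \<alpha>" using I[of 0] unfolding A_def k_def \<mu>_def by simp
  ultimately show ?thesis by blast
qed


lemma ch_imp_contains:
  assumes pa: "is_partition \<alpha>" and sm: "strict_partition (m # \<nu>)" and x: "x \<in> set \<alpha>"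
    and c: "ch (set \<alpha>) \<nu> x m"
  shows "contains \<alpha> (m # \<nu>)"
proof -
  define \<mu> where "\<mu> = m # \<nu>"
  define k where "k = length \<mu>"
  from chE[OF c] obtain A where A0: "A 0 = x" and AS: "\<forall>p. 1 \<le> p \<and> p \<le> length \<nu> \<longrightarrow> A p \<in> set \<alpha>"
    and Ak: "A k = 0"
    and Ai: "\<forall>p\<le>length \<nu>. A (Suc p) + part \<mu> p \<le> A p + part \<mu> (Suc p)"
    unfolding \<mu>_def k_def by auto
  have sw: "sorted_wrt (>) \<mu>" and posm: "\<forall>y\<in>set \<mu>. 0 < y"
    using sm unfolding strict_partition_def is_partition_def \<mu>_def by auto
  have pstrict: "part \<mu> (Suc p) < part \<mu> p" if "p < k" for p
  proof (cases "Suc p < k")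
    case True thus ?thesis using sw sorted_wrt_nth_less[OF sw, of p "Suc p"]
      unfolding part_def k_def by auto
  next
    case False thus ?thesis using that posm nth_mem[of p \<mu>] unfolding part_def k_def by auto
  qed
  have pmono: "part \<mu> p \<le> part \<mu> q" if "q \<le> p" for p q
  proof -
    have "part \<mu> (q + d) \<le> part \<mu> q" for d
    proof (induction d)
      case (Suc d)
      show ?case
      proof (cases "q + d < k")
        case True thus ?thesis using pstrict[OF True] Suc by simp
      next
        case False thus ?thesis using Suc unfolding part_def k_def by auto
      qed
    qed simp
    thus ?thesis using that by (metis le_add_diff_inverse)
  qed
  have Ai': "A (Suc p) + part \<mu> p \<le> A p + part \<mu> (Suc p)" if "p < k" for p
    using Ai that unfolding k_def \<mu>_def by auto
  have Astep: "A (Suc p) < A p" if "p < k" for p using Ai'[OF that] pstrict[OF that] by linarith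
  have Adec: "A q < A p" if "p < q" "q \<le> k" for p q
  proof -
    have "A (Suc p + d) < A p" if "Suc p + d \<le> k" for d using that
    proof (induction d)
      case 0 thus ?case using Astep by simp
    next
      case (Suc d) thus ?case using Astep[of "Suc p + d"] by simp
    qed
    thus ?thesis using that by (metis Suc_leI le_add_diff_inverse)
  qed
  have Ale: "A q \<le> A p" if "p \<le> q" "q \<le> k" for p q
    using Adec[of p q] that by (cases "p = q") auto
  have tele: "part \<mu> q + A p \<le> part \<mu> p + A q" if "q \<le> p" "p \<le> k" for p q
  proof -
    have "part \<mu> q + A (q + d) \<le> part \<mu> (q + d) + A q" if "q + d \<le> k" for d using that
    proof (induction d)
      case (Suc d)
      hence "q + d < k" by simp
      from Ai'[OF this] Suc show ?case by simp
    qed simp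
    thus ?thesis using that by (metis le_add_diff_inverse)
  qed
  have Aset: "A p \<in> set \<alpha>" if "p < k" for p
    using AS A0 x that unfolding k_def \<mu>_def by (cases p) auto
  have "\<forall>p\<in>{..<k}. \<exists>i. i < length \<alpha> \<and> \<alpha> ! i = A p"
    using Aset by (auto simp: in_set_conv_nth)
  then obtain I where I: "\<And>p. p < k \<Longrightarrow> I p < length \<alpha> \<and> \<alpha> ! I p = A p"
    using bchoice[of "{..<k}"] by (metis lessThan_iff)
  have Imono: "I p < I q" if "p < q" "q < k" for p q
  proof (rule ccontr)
    assume "\<not> I p < I q"
    hence "\<alpha> ! I p \<le> \<alpha> ! I q" using pa I[of p] I[of q] that unfolding is_partition_def
      by (intro sorted_ge_nth) auto
    thus False using Adec[of p q] I[of p] I[of q] that by auto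
  qed
  have Iinj: "inj_on I {..<k}"
    by (intro inj_onI) (metis Imono lessThan_iff linorder_neqE_nat less_irrefl)
  define R where "R = I ` {..<k}"
  have rkR: "rk R (I p) = p" if "p < k" for p
  proof -
    have "{r\<in>R. r < I p} = I ` {..<p}"
    proof
      show "{r\<in>R. r < I p} \<subseteq> I ` {..<p}"
      proof
        fix r assume "r \<in> {r\<in>R. r < I p}"
        then obtain q where q: "q < k" "r = I q" "I q < I p" unfolding R_def by auto
        have "q < p" using Imono[of p q] q that by (metis linorder_neqE_nat less_asym less_irrefl)
        thus "r \<in> I ` {..<p}" using q by auto
      qed
    next
      show "I ` {..<p} \<subseteq> {r\<in>R. r < I p}" using Imono that unfolding R_def by auto
    qed
    moreover have "card (I ` {..<p}) = p"
      using that by (subst card_image) (auto intro: inj_on_subset[OF Iinj])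
    ultimately show ?thesis unfolding rk_def by simp
  qed
  define t where "t y p = part \<mu> p - (A p - y)" for y p
  define h where "h y = Max (t y ` {..k})" for y
  have hle: "h y \<le> h (Suc y)" for y
    unfolding h_def by (rule Max.boundedI) (auto simp: t_def intro!: Max.coboundedI[THEN order.trans[rotated]] image_eqI)
  have hle2: "h (Suc y) \<le> Suc (h y)" for y
  proof -
    have "t (Suc y) p \<le> Suc (h y)" if "p \<le> k" for p
    proof -
      have "t y p \<le> h y" unfolding h_def using that by (intro Max.coboundedI) auto
      thus ?thesis unfolding t_def by linarith
    qed
    thus ?thesis unfolding h_def[of "Suc y"] by (intro Max.boundedI) auto
  qed
  define C where "C = {c. h (Suc c) = Suc (h c)}"
  have h0: "h 0 = 0"
  proof -
    have pk0: "part \<mu> k = 0" unfolding part_def k_def by simp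
    have "t 0 p = 0" if "p \<le> k" for p using tele[of p k] that Ak pk0 unfolding t_def by simp
    hence "t 0 ` {..k} = {0}" by auto
    thus ?thesis unfolding h_def by simp
  qed
  have rkC: "rk C y = h y" for y
  proof (induction y)
    case 0 thus ?case using h0 unfolding rk_def by simp
  next
    case (Suc y)
    show ?case
    proof (cases "y \<in> C")
      case True
      have "{c\<in>C. c < Suc y} = insert y {c\<in>C. c < y}" using True by auto
      hence "rk C (Suc y) = Suc (rk C y)" unfolding rk_def using rk_fin by simp
      thus ?thesis using Suc True unfolding C_def by simp
    next
      case False
      have "{c\<in>C. c < Suc y} = {c\<in>C. c < y}" using False less_Suc_eq by auto
      hence "rk C (Suc y) = rk C y" unfolding rk_def by simp
      thus ?thesis using Suc False hle[of y] hle2[of y] unfolding C_def by simp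
    qed
  qed
  have hA: "h (A p) = part \<mu> p" if "p \<le> k" for p
  proof (rule antisym)
    show "h (A p) \<le> part \<mu> p" unfolding h_def
    proof (rule Max.boundedI)
      fix z assume "z \<in> t (A p) ` {..k}"
      then obtain q where q: "q \<le> k" "z = t (A p) q" by auto
      show "z \<le> part \<mu> p"
      proof (cases "q \<le> p")
        case True thus ?thesis using tele[of q p] Ale[of q p] q that unfolding t_def by simp
      next
        case False thus ?thesis using pmono[of p q] Ale[of p q] q unfolding t_def by simp
      qed
    qed auto
    show "part \<mu> p \<le> h (A p)" unfolding h_def using that
      by (intro Max.coboundedI[THEN order.trans[rotated]]) (auto simp: t_def)
  qed
  have "\<forall>p j. (p, j) \<in> ferrers \<mu> \<longleftrightarrow> (\<exists>i\<in>R. i < length \<alpha> \<and> p = rk R i \<and> j < rk C (\<alpha> ! i))"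
  proof (intro allI)
    fix p j
    show "(p, j) \<in> ferrers \<mu> \<longleftrightarrow> (\<exists>i\<in>R. i < length \<alpha> \<and> p = rk R i \<and> j < rk C (\<alpha> ! i))"
    proof
      assume "(p, j) \<in> ferrers \<mu>"
      hence pj: "p < k" "j < \<mu> ! p" unfolding ferrers_def k_def by auto
      have "rk C (\<alpha> ! I p) = \<mu> ! p" using I[OF pj(1)] rkC hA[of p] pj unfolding part_def k_def by simp
      thus "\<exists>i\<in>R. i < length \<alpha> \<and> p = rk R i \<and> j < rk C (\<alpha> ! i)"
        using pj I[OF pj(1)] rkR[OF pj(1)] unfolding R_def by (intro bexI[of _ "I p"]) auto
    next
      assume "\<exists>i\<in>R. i < length \<alpha> \<and> p = rk R i \<and> j < rk C (\<alpha> ! i)"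
      then obtain q where q: "q < k" "p = rk R (I q)" "j < rk C (\<alpha> ! I q)" unfolding R_def by auto
      have "p = q" using q rkR by simp
      moreover have "rk C (\<alpha> ! I q) = \<mu> ! q" using I[OF q(1)] rkC hA[of q] q unfolding part_def k_def by simp
      ultimately show "(p, j) \<in> ferrers \<mu>" using q unfolding ferrers_def k_def by auto
    qed
  qed
  thus ?thesis unfolding contains_iff_rk \<mu>_def by blast
qed


lemma contains_iff_ch:
  "is_partition \<alpha> \<Longrightarrow> strict_partition (m # \<nu>) \<Longrightarrow> contains \<alpha> (m # \<nu>) \<longleftrightarrow> (\<exists>x\<in>set \<alpha>. ch (set \<alpha>) \<nu> x m)"
  using contains_imp_ch ch_imp_contains strict_partition_def by blast

lemma ch_mono: "ch S \<nu> x q \<Longrightarrow> x \<le> x' \<Longrightarrow> ch S \<nu> x' q"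
  by (induction \<nu> arbitrary: x q) force+

lemma ch_shift: "ch S \<nu> (x + d) (q + d) = ch S \<nu> x q"
  by (induction \<nu> arbitrary: x q) auto

lemma ch_local: "sorted_wrt (>) (q # \<nu>) \<Longrightarrow> (\<forall>a<x. a \<in> S \<longleftrightarrow> a \<in> S') \<Longrightarrow> ch S \<nu> x q = ch S' \<nu> x q"
proof (induction \<nu> arbitrary: x q)
  case (Cons n \<nu>)
  have "n < q" using Cons.prems by simp
  have IH: "a < x \<Longrightarrow> ch S \<nu> a n = ch S' \<nu> a n" for a
    using Cons.IH[of n a] Cons.prems by auto
  show ?case
  proof
    assume "ch S (n # \<nu>) x q"
    then obtain a where "a \<in> S" "a + q \<le> x + n" "ch S \<nu> a n" by auto
    moreover hence "a < x" using \<open>n < q\<close> by linarith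
    ultimately show "ch S' (n # \<nu>) x q" using IH Cons.prems(2) by auto
  next
    assume "ch S' (n # \<nu>) x q"
    then obtain a where "a \<in> S'" "a + q \<le> x + n" "ch S' \<nu> a n" by auto
    moreover hence "a < x" using \<open>n < q\<close> by linarith
    ultimately show "ch S (n # \<nu>) x q" using IH Cons.prems(2) by auto
  qed
qed simp

lemma ch_zero: "sorted_wrt (>) (q # \<nu>) \<Longrightarrow> 0 < q \<Longrightarrow> \<not> ch S \<nu> 0 q"
  by (cases \<nu>) auto

lemma ch_suc: "sorted_wrt (>) (q # \<nu>) \<Longrightarrow> ch S \<nu> x (Suc q) \<longleftrightarrow> 0 < x \<and> ch S \<nu> (x - 1) q"
proof -
  assume s: "sorted_wrt (>) (q # \<nu>)"
  hence s': "sorted_wrt (>) (Suc q # \<nu>)" by auto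
  show ?thesis
  proof (cases x)
    case 0 thus ?thesis using ch_zero[OF s'] by simp
  next
    case (Suc y) thus ?thesis using ch_shift[of S \<nu> y 1 q] by simp
  qed
qed

lemma padd_Cons: "padd (x # xs) (y # ys) = (if 0 < x + y then [x + y] else []) @ padd xs ys"
proof -
  have "[0..<max (length (x # xs)) (length (y # ys))] = 0 # map Suc [0..<max (length xs) (length ys)]"
    by (simp add: upt_conv_Cons map_Suc_upt del: upt_Suc)
  thus ?thesis unfolding padd_def by (simp add: comp_def)
qed

lemma padd_Nil2: "padd xs [] = filter (\<lambda>x. 0 < x) xs"
proof -
  have "map (\<lambda>i. part xs i + part [] i) [0..<length xs] = xs" by (rule nth_equalityI) (auto simp: part_def)
  thus ?thesis unfolding padd_def by simp
qed

lemma padd_append: "length zs \<le> length xs \<Longrightarrow> padd (xs @ ys) zs = padd xs zs @ filter (\<lambda>x. 0 < x) ys"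
proof (induction xs arbitrary: zs)
  case Nil thus ?case by (simp add: padd_Nil2)
next
  case (Cons x xs)
  show ?case
  proof (cases zs)
    case Nil thus ?thesis by (simp add: padd_Nil2)
  next
    case (Cons z zs') thus ?thesis using Cons.IH[of zs'] Cons.prems by (simp add: padd_Cons)
  qed
qed

lemma padd_rep: "j \<le> k \<Longrightarrow> 0 < v \<Longrightarrow> padd (replicate k v) (replicate j w) = replicate j (v + w) @ replicate (k - j) v"
proof (induction k arbitrary: j)
  case 0 thus ?case by (simp add: padd_Nil2)
next
  case (Suc k)
  show ?case
  proof (cases j)
    case 0 thus ?thesis using Suc.prems by (simp add: padd_Nil2)
  next
    case (Suc j') thus ?thesis using Suc.IH[of j'] Suc.prems by (simp add: padd_Cons)
  qed
qed

lemma pos_filter: "\<forall>x\<in>set xs. 0 < x \<Longrightarrow> filter (\<lambda>x. 0 < (x::nat)) xs = xs"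
  by (simp add: filter_id_conv)

lemma decomp: "sorted_wrt (\<ge>) ((v::nat) # xs) \<Longrightarrow> \<exists>k r. v # xs = replicate (Suc k) v @ r \<and> (\<forall>y\<in>set r. y < v)"
proof (induction xs arbitrary: v)
  case Nil thus ?case by (intro exI[of _ 0] exI[of _ "[]"]) auto
next
  case (Cons w xs)
  show ?case
  proof (cases "w = v")
    case True
    with Cons.prems have "sorted_wrt (\<ge>) (v # xs)" by auto
    from Cons.IH[OF this] obtain k r where "v # xs = replicate (Suc k) v @ r" "\<forall>y\<in>set r. y < v" by blast
    thus ?thesis using True by (intro exI[of _ "Suc k"] exI[of _ r]) auto
  next
    case False
    hence "\<forall>y\<in>set (w # xs). y < v" using Cons.prems by auto
    thus ?thesis by (intro exI[of _ 0] exI[of _ "w # xs"]) auto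
  qed
qed

lemma decomp_uniq: "replicate k v @ r = replicate k' v' @ r' \<Longrightarrow> 0 < k \<Longrightarrow> 0 < k' \<Longrightarrow>
   \<forall>y\<in>set r. y < (v::nat) \<Longrightarrow> \<forall>y\<in>set r'. y < v' \<Longrightarrow> k = k' \<and> v = v' \<and> r = r'"
proof (induction k arbitrary: k')
  case 0 thus ?case by simp
next
  case (Suc k)
  note prems = Suc.prems and IH = Suc.IH
  have vv: "v = v'" using prems by (cases k') auto
  show ?case
  proof (cases k)
    case 0
    show ?thesis
    proof (cases k')
      case 0 thus ?thesis using prems by simp
    next
      case (Suc j) thus ?thesis using prems \<open>k = 0\<close> vv by (cases j) auto
    qed
  next
    case (Suc i)
    show ?thesis
    proof (cases k')
      case 0 thus ?thesis using prems by simp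
    next
      case (Suc j)
      show ?thesis
      proof (cases j)
        case 0 thus ?thesis using prems \<open>k' = Suc j\<close> \<open>k = Suc i\<close> vv by auto
      next
        case (Suc j')
        have "replicate k v @ r = replicate j v' @ r'" using prems \<open>k' = Suc j\<close> vv by auto
        from IH[OF this] show ?thesis using prems \<open>k = Suc i\<close> \<open>j = Suc j'\<close> \<open>k' = Suc j\<close> by auto
      qed
    qed
  qed
qed

lemma mlp_rep: "0 < k \<Longrightarrow> \<forall>y\<in>set r. y < v \<Longrightarrow> mlp (replicate k v @ r) = k"
  unfolding mlp_def by (cases k) (auto simp: filter_empty_conv)


lemma strict_ext: "strict_partition (m # \<nu>) \<Longrightarrow> strict_partition (Suc m # \<nu>) \<and> strict_partition (Suc m # m # \<nu>)
   \<and> strict_partition (Suc (Suc m) # m # \<nu>) \<and> sorted_wrt (>) (m # \<nu>)"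
  unfolding strict_partition_def is_partition_def by auto

lemma sorted_rep: "sorted_wrt (\<ge>) (replicate k (v::nat))"
  by (induction k) auto

lemma part_rep: "0 < v \<Longrightarrow> is_partition r \<Longrightarrow> \<forall>y\<in>set r. y < v \<Longrightarrow> is_partition (replicate k v @ r)"
  unfolding is_partition_def using sorted_rep[of k v]
  by (auto simp: sorted_wrt_append)

lemma weight_pos: "0 < k \<Longrightarrow> 0 < v \<Longrightarrow> 0 < weight (replicate k v @ r)"
  unfolding weight_def by (cases k) auto

lemma set_rep: "0 < k \<Longrightarrow> set (replicate k v @ r) = insert v (set r)"
  by (cases k) auto

lemma Qchar1:
  assumes sp: "strict_partition (m # \<nu>)" and k: "0 < k" and v: "0 < v" and pr: "is_partition r"
    and rv: "\<forall>y\<in>set r. y < v"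
  shows "replicate k v @ r \<in> Q (m # \<nu>) (Suc m # \<nu>) \<longleftrightarrow> ch (set r) \<nu> v m \<and> \<not> ch (set r) \<nu> (v - 1) m"
proof -
  define \<beta> where "\<beta> = replicate k v @ r"
  have pb: "is_partition \<beta>" using part_rep[OF v pr rv] unfolding \<beta>_def .
  have S: "set \<beta> = insert v (set r)" using set_rep[OF k] unfolding \<beta>_def .
  have se: "strict_partition (Suc m # \<nu>)" "sorted_wrt (>) (m # \<nu>)" using strict_ext[OF sp] by auto
  have loc: "ch (set \<beta>) \<nu> x m = ch (set r) \<nu> x m" if "x \<le> v" for x
    using that rv by (intro ch_local[OF se(2)]) (auto simp: S)
  have le: "x \<in> set \<beta> \<Longrightarrow> x \<le> v" for x using S rv by auto
  have c1: "contains \<beta> (m # \<nu>) \<longleftrightarrow> ch (set r) \<nu> v m"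
  proof -
    have "contains \<beta> (m # \<nu>) \<longleftrightarrow> (\<exists>x\<in>set \<beta>. ch (set \<beta>) \<nu> x m)" by (rule contains_iff_ch[OF pb sp])
    also have "\<dots> \<longleftrightarrow> ch (set \<beta>) \<nu> v m" using le S by (auto intro: ch_mono)
    finally show ?thesis using loc by simp
  qed
  have c2: "contains \<beta> (Suc m # \<nu>) \<longleftrightarrow> ch (set r) \<nu> (v - 1) m"
  proof -
    have "contains \<beta> (Suc m # \<nu>) \<longleftrightarrow> (\<exists>x\<in>set \<beta>. ch (set \<beta>) \<nu> x (Suc m))" by (rule contains_iff_ch[OF pb se(1)])
    also have "\<dots> \<longleftrightarrow> (\<exists>x\<in>set \<beta>. 0 < x \<and> ch (set \<beta>) \<nu> (x - 1) m)" using ch_suc[OF se(2)] by simp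
    also have "\<dots> \<longleftrightarrow> ch (set \<beta>) \<nu> (v - 1) m"
    proof
      assume "\<exists>x\<in>set \<beta>. 0 < x \<and> ch (set \<beta>) \<nu> (x - 1) m"
      then obtain x where "x \<in> set \<beta>" "ch (set \<beta>) \<nu> (x - 1) m" by auto
      moreover have "x - 1 \<le> v - 1" using le[OF \<open>x \<in> set \<beta>\<close>] by simp
      ultimately show "ch (set \<beta>) \<nu> (v - 1) m" using ch_mono by blast
    qed (use S v in auto)
    finally show ?thesis using loc by simp
  qed
  show ?thesis using c1 c2 pb weight_pos[OF k v] unfolding Q_def \<beta>_def by auto
qed


lemma contains_bar:
  assumes sp: "strict_partition (m # \<nu>)" and pb: "is_partition \<beta>"
  shows "contains \<beta> (Suc m # m # \<nu>) \<longleftrightarrow> (\<exists>b\<in>set \<beta>. \<exists>a\<in>set \<beta>. a < b \<and> ch (set \<beta>) \<nu> a m)"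
proof -
  have "contains \<beta> (Suc m # m # \<nu>) \<longleftrightarrow> (\<exists>b\<in>set \<beta>. ch (set \<beta>) (m # \<nu>) b (Suc m))"
    using contains_iff_ch[OF pb] strict_ext[OF sp] by blast
  also have "\<dots> \<longleftrightarrow> (\<exists>b\<in>set \<beta>. \<exists>a\<in>set \<beta>. a < b \<and> ch (set \<beta>) \<nu> a m)"
    by (auto; metis add_Suc_right add_le_cancel_right less_eq_Suc_le add.commute)
  finally show ?thesis .
qed

lemma contains_bar1:
  assumes sp: "strict_partition (m # \<nu>)" and pb: "is_partition \<beta>"
  shows "contains \<beta> (Suc (Suc m) # m # \<nu>) \<longleftrightarrow> (\<exists>b\<in>set \<beta>. \<exists>a\<in>set \<beta>. a + 2 \<le> b \<and> ch (set \<beta>) \<nu> a m)"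
proof -
  have "contains \<beta> (Suc (Suc m) # m # \<nu>) \<longleftrightarrow> (\<exists>b\<in>set \<beta>. ch (set \<beta>) (m # \<nu>) b (Suc (Suc m)))"
    using contains_iff_ch[OF pb] strict_ext[OF sp] by blast
  also have "\<dots> \<longleftrightarrow> (\<exists>b\<in>set \<beta>. \<exists>a\<in>set \<beta>. a + 2 \<le> b \<and> ch (set \<beta>) \<nu> a m)"
    by auto
  finally show ?thesis .
qed

lemma Qchar2:
  assumes sp: "strict_partition (m # \<nu>)" and k: "0 < k" and v: "0 < v" and pr: "is_partition r"
    and rv: "\<forall>y\<in>set r. y < v"
  shows "replicate k v @ r \<in> Q (m # \<nu>) (Suc m # m # \<nu>) \<longleftrightarrow> ch (set r) \<nu> v m \<and> (\<forall>y\<in>set r. \<not> ch (set r) \<nu> y m)"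
proof -
  define \<beta> where "\<beta> = replicate k v @ r"
  have pb: "is_partition \<beta>" using part_rep[OF v pr rv] unfolding \<beta>_def .
  have S: "set \<beta> = insert v (set r)" using set_rep[OF k] unfolding \<beta>_def .
  have se: "sorted_wrt (>) (m # \<nu>)" using strict_ext[OF sp] by auto
  have loc: "ch (set \<beta>) \<nu> x m = ch (set r) \<nu> x m" if "x \<le> v" for x
    using that rv by (intro ch_local[OF se]) (auto simp: S)
  have le: "x \<in> set \<beta> \<Longrightarrow> x \<le> v" for x using S rv by auto
  have c1: "contains \<beta> (m # \<nu>) \<longleftrightarrow> ch (set r) \<nu> v m"
  proof -
    have "contains \<beta> (m # \<nu>) \<longleftrightarrow> (\<exists>x\<in>set \<beta>. ch (set \<beta>) \<nu> x m)" by (rule contains_iff_ch[OF pb sp])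
    also have "\<dots> \<longleftrightarrow> ch (set \<beta>) \<nu> v m" using le S by (auto intro: ch_mono)
    finally show ?thesis using loc by simp
  qed
  have c2: "contains \<beta> (Suc m # m # \<nu>) \<longleftrightarrow> (\<exists>y\<in>set r. ch (set r) \<nu> y m)"
  proof -
    have "contains \<beta> (Suc m # m # \<nu>) \<longleftrightarrow> (\<exists>b\<in>set \<beta>. \<exists>a\<in>set \<beta>. a < b \<and> ch (set \<beta>) \<nu> a m)"
      by (rule contains_bar[OF sp pb])
    also have "\<dots> \<longleftrightarrow> (\<exists>y\<in>set r. ch (set r) \<nu> y m)"
    proof
      assume "\<exists>b\<in>set \<beta>. \<exists>a\<in>set \<beta>. a < b \<and> ch (set \<beta>) \<nu> a m"
      then obtain a b where ab: "b \<in> set \<beta>" "a \<in> set \<beta>" "a < b" "ch (set \<beta>) \<nu> a m" by auto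
      have "a < v" using le[OF ab(1)] ab(3) by simp
      hence "a \<in> set r" using ab(2) S by auto
      thus "\<exists>y\<in>set r. ch (set r) \<nu> y m" using loc[of a] \<open>a < v\<close> ab(4) by auto
    next
      assume "\<exists>y\<in>set r. ch (set r) \<nu> y m"
      then obtain y where "y \<in> set r" "ch (set r) \<nu> y m" by auto
      thus "\<exists>b\<in>set \<beta>. \<exists>a\<in>set \<beta>. a < b \<and> ch (set \<beta>) \<nu> a m"
        using rv loc[of y] S by (intro bexI[of _ v] bexI[of _ y]) auto
    qed
    finally show ?thesis .
  qed
  show ?thesis using c1 c2 pb weight_pos[OF k v] unfolding Q_def \<beta>_def by auto
qed

lemma Qchar3:
  assumes sp: "strict_partition (m # \<nu>)" and k1: "0 < k1" and k2: "0 < k2" and v: "0 < v2" and v12: "v2 < v1"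
    and pr: "is_partition r" and rv: "\<forall>y\<in>set r. y < v2"
  shows "replicate k1 v1 @ replicate k2 v2 @ r \<in> Q (Suc m # m # \<nu>) (Suc (Suc m) # m # \<nu>) \<longleftrightarrow>
     v1 = Suc v2 \<and> ch (set r) \<nu> v2 m \<and> (\<forall>y\<in>set r. \<not> ch (set r) \<nu> y m)"
proof -
  define \<beta> where "\<beta> = replicate k1 v1 @ replicate k2 v2 @ r"
  have pr2: "is_partition (replicate k2 v2 @ r)" using part_rep[OF v pr rv] .
  have S2: "set (replicate k2 v2 @ r) = insert v2 (set r)" using set_rep[OF k2] .
  have "\<forall>y\<in>set (replicate k2 v2 @ r). y < v1" using S2 v12 rv by auto
  hence pb: "is_partition \<beta>" using part_rep[OF _ pr2, of v1 k1] v v12 unfolding \<beta>_def by auto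
  have S: "set \<beta> = insert v1 (insert v2 (set r))" using k1 k2 unfolding \<beta>_def by (cases k1; cases k2) auto
  have se: "sorted_wrt (>) (m # \<nu>)" using strict_ext[OF sp] by auto
  have loc: "ch (set \<beta>) \<nu> x m = ch (set r) \<nu> x m" if "x \<le> v2" for x
    using that rv v12 by (intro ch_local[OF se]) (auto simp: S)
  have le: "x \<in> set \<beta> \<Longrightarrow> x \<le> v1" for x using S rv v12 by auto
  have le2: "x \<in> set \<beta> \<Longrightarrow> x < v1 \<Longrightarrow> x \<le> v2" for x using S rv by auto
  have pos: "0 < weight \<beta>" using k1 v12 unfolding weight_def \<beta>_def by (cases k1) auto
  have cb: "contains \<beta> (Suc m # m # \<nu>) \<longleftrightarrow> (\<exists>b\<in>set \<beta>. \<exists>a\<in>set \<beta>. a < b \<and> ch (set \<beta>) \<nu> a m)"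
    by (rule contains_bar[OF sp pb])
  have cb1: "contains \<beta> (Suc (Suc m) # m # \<nu>) \<longleftrightarrow> (\<exists>b\<in>set \<beta>. \<exists>a\<in>set \<beta>. a + 2 \<le> b \<and> ch (set \<beta>) \<nu> a m)"
    by (rule contains_bar1[OF sp pb])
  show ?thesis
  proof
    assume "replicate k1 v1 @ replicate k2 v2 @ r \<in> Q (Suc m # m # \<nu>) (Suc (Suc m) # m # \<nu>)"
    hence A: "\<exists>b\<in>set \<beta>. \<exists>a\<in>set \<beta>. a < b \<and> ch (set \<beta>) \<nu> a m"
      and B: "\<not> (\<exists>b\<in>set \<beta>. \<exists>a\<in>set \<beta>. a + 2 \<le> b \<and> ch (set \<beta>) \<nu> a m)"
      using cb cb1 unfolding Q_def \<beta>_def by auto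
    from A obtain a b where ab: "b \<in> set \<beta>" "a \<in> set \<beta>" "a < b" "ch (set \<beta>) \<nu> a m" by auto
    have "a \<le> v2" using le2[OF ab(2)] le[OF ab(1)] ab(3) by simp
    hence cv2: "ch (set \<beta>) \<nu> v2 m" using ab(4) ch_mono by blast
    have v1e: "v1 = Suc v2"
    proof (rule ccontr)
      assume "v1 \<noteq> Suc v2"
      hence "v2 + 2 \<le> v1" using v12 by simp
      thus False using B cv2 S by auto
    qed
    have "\<forall>y\<in>set r. \<not> ch (set r) \<nu> y m"
    proof (intro ballI notI)
      fix y assume y: "y \<in> set r" "ch (set r) \<nu> y m"
      have "y < v2" using rv y by auto
      hence "ch (set \<beta>) \<nu> y m" using loc[of y] y by simp
      moreover have "y + 2 \<le> v1" using \<open>y < v2\<close> v1e by simp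
      ultimately show False using B S y by auto
    qed
    thus "v1 = Suc v2 \<and> ch (set r) \<nu> v2 m \<and> (\<forall>y\<in>set r. \<not> ch (set r) \<nu> y m)"
      using v1e cv2 loc[of v2] by simp
  next
    assume H: "v1 = Suc v2 \<and> ch (set r) \<nu> v2 m \<and> (\<forall>y\<in>set r. \<not> ch (set r) \<nu> y m)"
    have "\<exists>b\<in>set \<beta>. \<exists>a\<in>set \<beta>. a < b \<and> ch (set \<beta>) \<nu> a m"
      using H loc[of v2] S v12 by auto
    moreover have "\<not> (\<exists>b\<in>set \<beta>. \<exists>a\<in>set \<beta>. a + 2 \<le> b \<and> ch (set \<beta>) \<nu> a m)"
    proof
      assume "\<exists>b\<in>set \<beta>. \<exists>a\<in>set \<beta>. a + 2 \<le> b \<and> ch (set \<beta>) \<nu> a m"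
      then obtain a b where ab: "b \<in> set \<beta>" "a \<in> set \<beta>" "a + 2 \<le> b" "ch (set \<beta>) \<nu> a m" by auto
      have "a < v2" using le[OF ab(1)] ab(3) H by simp
      hence "a \<in> set r" using ab(2) S v12 by auto
      thus False using H loc[of a] \<open>a < v2\<close> ab(4) by auto
    qed
    ultimately show "replicate k1 v1 @ replicate k2 v2 @ r \<in> Q (Suc m # m # \<nu>) (Suc (Suc m) # m # \<nu>)"
      using cb cb1 pb pos unfolding Q_def \<beta>_def by auto
  qed
qed

lemma Qchar3_single:
  assumes sp: "strict_partition (m # \<nu>)" and k: "0 < k" and v: "0 < v"
  shows "replicate k v \<notin> Q (Suc m # m # \<nu>) X"
proof
  assume "replicate k v \<in> Q (Suc m # m # \<nu>) X"
  hence "is_partition (replicate k v)" "contains (replicate k v) (Suc m # m # \<nu>)" unfolding Q_def by auto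
  thus False using contains_bar[OF sp] k by (cases k) auto
qed

lemma decomp_part: "is_partition \<beta> \<Longrightarrow> \<beta> \<noteq> [] \<Longrightarrow>
  \<exists>k v r. 0 < k \<and> 0 < v \<and> \<beta> = replicate k v @ r \<and> is_partition r \<and> (\<forall>y\<in>set r. y < v)"
proof -
  assume pb: "is_partition \<beta>" "\<beta> \<noteq> []"
  then obtain v xs where b: "\<beta> = v # xs" by (cases \<beta>) auto
  have sb: "sorted_wrt (\<ge>) (v # xs)" using pb(1) b unfolding is_partition_def by simp
  from decomp[OF sb] obtain k r where kr: "v # xs = replicate (Suc k) v @ r" "\<forall>y\<in>set r. y < v"
    by blast
  have b2: "\<beta> = replicate (Suc k) v @ r" using b kr(1) by (simp only:)
  have "sorted_wrt (\<ge>) r" using pb(1) unfolding b2 is_partition_def sorted_wrt_append by blast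
  moreover have "\<forall>y\<in>set r. 0 < y" using pb(1) unfolding b2 is_partition_def set_append by blast
  ultimately have "is_partition r" unfolding is_partition_def by blast
  moreover have "0 < v" using pb(1) unfolding b is_partition_def by simp
  ultimately show ?thesis using kr(2) b2 by blast
qed

lemma Q_nonempty: "\<beta> \<in> Q X Y \<Longrightarrow> is_partition \<beta> \<and> \<beta> \<noteq> []"
  unfolding Q_def weight_def by auto

lemma least_ch:
  assumes sp: "strict_partition (m # \<nu>)" and c: "ch R \<nu> v' m"
  defines "u \<equiv> LEAST x. ch R \<nu> x m"
  shows "ch R \<nu> u m" "u \<le> v'" "0 < u" "\<not> ch R \<nu> (u - 1) m" "\<And>y. ch R \<nu> y m \<Longrightarrow> u \<le> y"
proof -
  show cu: "ch R \<nu> u m" unfolding u_def using c by (rule LeastI)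
  show "u \<le> v'" unfolding u_def using c by (rule Least_le)
  show "\<And>y. ch R \<nu> y m \<Longrightarrow> u \<le> y" unfolding u_def by (rule Least_le)
  have s: "sorted_wrt (>) (m # \<nu>)" "0 < m" using sp unfolding strict_partition_def is_partition_def by auto
  show u0: "0 < u" using ch_zero[OF s] cu by (cases u) auto
  have "u - 1 < u" using u0 by simp
  thus "\<not> ch R \<nu> (u - 1) m" using not_less_Least[of "u - 1" "\<lambda>x. ch R \<nu> x m"] unfolding u_def by blast
qed

lemma uniq_v:
  assumes sp: "strict_partition (m # \<nu>)" and c: "ch R \<nu> v m" and n: "\<not> ch R \<nu> (v - 1) m"
  shows "v = (LEAST x. ch R \<nu> x m)"
proof -
  note L = least_ch[OF sp c]
  show ?thesis
  proof (rule ccontr)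
    assume "v \<noteq> (LEAST x. ch R \<nu> x m)"
    hence "(LEAST x. ch R \<nu> x m) \<le> v - 1" using L(2) by simp
    thus False using ch_mono[OF L(1)] n by blast
  qed
qed

lemma QA_elim:
  assumes sp: "strict_partition (m # \<nu>)" and a: "\<alpha> \<in> Q (m # \<nu>) (Suc m # \<nu>)"
  shows "\<exists>k v r. 0 < k \<and> 0 < v \<and> \<alpha> = replicate k v @ r \<and> is_partition r \<and> (\<forall>y\<in>set r. y < v)
     \<and> ch (set r) \<nu> v m \<and> \<not> ch (set r) \<nu> (v - 1) m \<and> (\<forall>y\<in>set r. \<not> ch (set r) \<nu> y m)"
proof -
  obtain k v r where d: "0 < k" "0 < v" "\<alpha> = replicate k v @ r" "is_partition r" "\<forall>y\<in>set r. y < v"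
    using decomp_part[of \<alpha>] Q_nonempty[OF a] by blast
  have "replicate k v @ r \<in> Q (m # \<nu>) (Suc m # \<nu>)" using a d(3) by (simp only:)
  hence c: "ch (set r) \<nu> v m" "\<not> ch (set r) \<nu> (v - 1) m" using Qchar1[OF sp d(1,2,4,5)] by blast+
  have "\<forall>y\<in>set r. \<not> ch (set r) \<nu> y m"
  proof (intro ballI notI)
    fix y assume "y \<in> set r" "ch (set r) \<nu> y m"
    moreover have "y \<le> v - 1" using d(5) \<open>y \<in> set r\<close> by fastforce
    ultimately show False using c(2) ch_mono by blast
  qed
  thus ?thesis using d c by blast
qed

lemma padd_rep_app: "0 < k \<Longrightarrow> 0 < v \<Longrightarrow> is_partition r \<Longrightarrow> j \<le> k \<Longrightarrow>
  padd (replicate k v @ r) (replicate j w) = replicate j (v + w) @ replicate (k - j) v @ r"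
  using padd_append[of "replicate j w" "replicate k v" r] padd_rep[of j k v w] pos_filter[of r]
  unfolding is_partition_def by simp

lemma Mset_rep: "0 < k \<Longrightarrow> 0 < v \<Longrightarrow> is_partition r \<Longrightarrow> \<forall>y\<in>set r. y < v \<Longrightarrow>
  Mset (replicate k v @ r) = {replicate k (v + w) @ r | w. True}"
  unfolding Mset_def using mlp_rep[of k r v] padd_rep_app[of k v r k] by simp

lemma Nset_rep: "0 < k \<Longrightarrow> 0 < v \<Longrightarrow> is_partition r \<Longrightarrow> \<forall>y\<in>set r. y < v \<Longrightarrow>
  Nset (replicate k v @ r) = {replicate c (v + w + 1) @ replicate (k - c) (v + w) @ r | w c. 0 < c \<and> c < k}"
proof -
  assume a: "0 < k" "0 < v" "is_partition r" "\<forall>y\<in>set r. y < v"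
  have P: "padd (padd (replicate k v @ r) (replicate k w)) (replicate c 1) = replicate c (v + w + 1) @ replicate (k - c) (v + w) @ r"
    if "c < k" for w c
    using padd_rep_app[of k v r k w] padd_rep_app[of k "v + w" r c 1] a that by simp
  have m: "mlp (replicate k v @ r) = k" using mlp_rep[of k r v] a by simp
  show ?thesis unfolding Nset_def m
  proof (intro set_eqI iffI)
    fix x assume "x \<in> {padd (padd (replicate k v @ r) (replicate k w)) (replicate c 1) |w c. 0 < c \<and> c < k}"
    then obtain w c where "x = padd (padd (replicate k v @ r) (replicate k w)) (replicate c 1)" "0 < c" "c < k" by blast
    thus "x \<in> {replicate c (v + w + 1) @ replicate (k - c) (v + w) @ r |w c. 0 < c \<and> c < k}" using P by blast
  next
    fix x assume "x \<in> {replicate c (v + w + 1) @ replicate (k - c) (v + w) @ r |w c. 0 < c \<and> c < k}"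
    then obtain w c where wc: "x = replicate c (v + w + 1) @ replicate (k - c) (v + w) @ r" "0 < c" "c < k" by blast
    hence "x = padd (padd (replicate k v @ r) (replicate k w)) (replicate c 1)" using P[of c w] by simp
    thus "x \<in> {padd (padd (replicate k v @ r) (replicate k w)) (replicate c 1) |w c. 0 < c \<and> c < k}" using wc by blast
  qed
qed

lemma QA_uniqM:
  assumes sp: "strict_partition (m # \<nu>)" and a: "\<alpha> \<in> Q (m # \<nu>) (Suc m # \<nu>)" and b: "\<beta> \<in> Mset \<alpha>"
    and bd: "\<beta> = replicate k v' @ r" "0 < k" "\<forall>y\<in>set r. y < v'"
  shows "\<alpha> = replicate k (LEAST x. ch (set r) \<nu> x m) @ r"
proof -
  obtain k1 v1 r1 where d: "0 < k1" "0 < v1" "\<alpha> = replicate k1 v1 @ r1" "is_partition r1" "\<forall>y\<in>set r1. y < v1"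
    "ch (set r1) \<nu> v1 m" "\<not> ch (set r1) \<nu> (v1 - 1) m"
    using QA_elim[OF sp a] by blast
  have "\<beta> \<in> Mset (replicate k1 v1 @ r1)" using b d(3) by (simp only:)
  then obtain w where w: "\<beta> = replicate k1 (v1 + w) @ r1" using Mset_rep[OF d(1,2,4,5)] by blast
  have "replicate k1 (v1 + w) @ r1 = replicate k v' @ r" using w bd(1) by (simp only:)
  moreover have "\<forall>y\<in>set r1. y < v1 + w" using d(5) by fastforce
  ultimately have e: "k1 = k" "r1 = r" using decomp_uniq[of k1 "v1 + w" r1 k v' r] d(1) bd(2,3) by blast+
  have "v1 = (LEAST x. ch (set r) \<nu> x m)" using uniq_v[OF sp d(6,7)] e by simp
  thus ?thesis using d(3) e by simp
qed

lemma QA_uniqN: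
  assumes sp: "strict_partition (m # \<nu>)" and a: "\<alpha> \<in> Q (m # \<nu>) (Suc m # \<nu>)" and b: "\<beta> \<in> Nset \<alpha>"
    and bd: "\<beta> = replicate k1 v1 @ replicate k2 v2 @ r" "0 < k1" "0 < k2" "v2 < v1" "\<forall>y\<in>set r. y < v2"
  shows "\<alpha> = replicate (k1 + k2) (LEAST x. ch (set r) \<nu> x m) @ r"
proof -
  obtain k v r1 where d: "0 < k" "0 < v" "\<alpha> = replicate k v @ r1" "is_partition r1" "\<forall>y\<in>set r1. y < v"
    "ch (set r1) \<nu> v m" "\<not> ch (set r1) \<nu> (v - 1) m"
    using QA_elim[OF sp a] by blast
  have "\<beta> \<in> Nset (replicate k v @ r1)" using b d(3) by (simp only:)
  then obtain w c where w: "\<beta> = replicate c (v + w + 1) @ replicate (k - c) (v + w) @ r1" "0 < c" "c < k"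
    using Nset_rep[OF d(1,2,4,5)] by blast
  have eq: "replicate c (v + w + 1) @ (replicate (k - c) (v + w) @ r1) = replicate k1 v1 @ (replicate k2 v2 @ r)"
    using w(1) bd(1) by (simp only: append_assoc)
  have l1: "\<forall>y\<in>set (replicate (k - c) (v + w) @ r1). y < v + w + 1" using d(5) by auto
  have l2: "\<forall>y\<in>set (replicate k2 v2 @ r). y < v1" using bd(4,5) by auto
  from decomp_uniq[OF eq w(2) bd(2) l1 l2]
  have e1: "c = k1" "replicate (k - c) (v + w) @ r1 = replicate k2 v2 @ r" by auto
  have "k - c > 0" using w by simp
  moreover have "\<forall>y\<in>set r1. y < v + w" using d(5) by fastforce
  ultimately have e2: "k - c = k2" "r1 = r" using decomp_uniq[OF e1(2)] bd(3,5) by blast+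
  have "v = (LEAST x. ch (set r) \<nu> x m)" using uniq_v[OF sp d(6,7)] e2 by simp
  moreover have "k = k1 + k2" using e1(1) e2(1) w(3) by linarith
  ultimately show ?thesis using d(3) e2 by simp
qed

lemma QM_exists:
  assumes sp: "strict_partition (m # \<nu>)" and b: "\<beta> \<in> Q (m # \<nu>) (Suc m # m # \<nu>)"
  shows "\<exists>k v r. \<beta> = replicate k v @ r \<and> 0 < k \<and> (\<forall>y\<in>set r. y < v) \<and>
     replicate k (LEAST x. ch (set r) \<nu> x m) @ r \<in> Q (m # \<nu>) (Suc m # \<nu>) \<and>
     \<beta> \<in> Mset (replicate k (LEAST x. ch (set r) \<nu> x m) @ r)"
proof -
  obtain k v r where d: "0 < k" "0 < v" "\<beta> = replicate k v @ r" "is_partition r" "\<forall>y\<in>set r. y < v"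
    using decomp_part Q_nonempty[OF b] by blast
  have "replicate k v @ r \<in> Q (m # \<nu>) (Suc m # m # \<nu>)" using b d(3) by (simp only:)
  hence c: "ch (set r) \<nu> v m" "\<forall>y\<in>set r. \<not> ch (set r) \<nu> y m" using Qchar2[OF sp d(1,2,4,5)] by blast+
  define u where "u = (LEAST x. ch (set r) \<nu> x m)"
  note L = least_ch[OF sp c(1), folded u_def]
  have ru: "\<forall>y\<in>set r. y < u"
  proof
    fix y assume y: "y \<in> set r"
    show "y < u"
    proof (rule ccontr)
      assume "\<not> y < u"
      hence "ch (set r) \<nu> y m" using ch_mono[OF L(1)] by simp
      thus False using c(2) y by blast
    qed
  qed
  have a: "replicate k u @ r \<in> Q (m # \<nu>) (Suc m # \<nu>)" using Qchar1[OF sp d(1) L(3) d(4) ru] L by blast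
  have "replicate k (u + (v - u)) @ r \<in> Mset (replicate k u @ r)" using Mset_rep[OF d(1) L(3) d(4) ru] by blast
  hence "\<beta> \<in> Mset (replicate k u @ r)" using d(3) L(2) by simp
  thus ?thesis using a d unfolding u_def by blast
qed

lemma QN_exists:
  assumes sp: "strict_partition (m # \<nu>)" and b: "\<beta> \<in> Q (Suc m # m # \<nu>) (Suc (Suc m) # m # \<nu>)"
  shows "\<exists>k1 v1 k2 v2 r. \<beta> = replicate k1 v1 @ replicate k2 v2 @ r \<and> 0 < k1 \<and> 0 < k2 \<and> v2 < v1 \<and> (\<forall>y\<in>set r. y < v2) \<and>
     replicate (k1 + k2) (LEAST x. ch (set r) \<nu> x m) @ r \<in> Q (m # \<nu>) (Suc m # \<nu>) \<and>
     \<beta> \<in> Nset (replicate (k1 + k2) (LEAST x. ch (set r) \<nu> x m) @ r)"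
proof -
  obtain k1 v1 r1 where d: "0 < k1" "0 < v1" "\<beta> = replicate k1 v1 @ r1" "is_partition r1" "\<forall>y\<in>set r1. y < v1"
    using decomp_part Q_nonempty[OF b] by blast
  have "r1 \<noteq> []"
  proof
    assume "r1 = []"
    hence "\<beta> = replicate k1 v1" using d(3) by (simp only: append_Nil2)
    thus False using Qchar3_single[OF sp d(1,2)] b by blast
  qed
  then obtain k2 v2 r where d2: "0 < k2" "0 < v2" "r1 = replicate k2 v2 @ r" "is_partition r" "\<forall>y\<in>set r. y < v2"
    using decomp_part d(4) by blast
  have "v2 \<in> set r1" using d2(1,3) by (cases k2) simp_all
  hence v12: "v2 < v1" using d(5) by blast
  have "replicate k1 v1 @ replicate k2 v2 @ r \<in> Q (Suc m # m # \<nu>) (Suc (Suc m) # m # \<nu>)"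
    using b d(3) d2(3) by (simp only:)
  hence c: "v1 = Suc v2" "ch (set r) \<nu> v2 m" "\<forall>y\<in>set r. \<not> ch (set r) \<nu> y m"
    using Qchar3[OF sp d(1) d2(1,2) v12 d2(4,5)] by blast+
  define u where "u = (LEAST x. ch (set r) \<nu> x m)"
  note L = least_ch[OF sp c(2), folded u_def]
  have ru: "\<forall>y\<in>set r. y < u"
  proof
    fix y assume y: "y \<in> set r"
    show "y < u"
    proof (rule ccontr)
      assume "\<not> y < u"
      hence "ch (set r) \<nu> y m" using ch_mono[OF L(1)] by simp
      thus False using c(3) y by blast
    qed
  qed
  have k0: "0 < k1 + k2" using d(1) by simp
  have a: "replicate (k1 + k2) u @ r \<in> Q (m # \<nu>) (Suc m # \<nu>)" using Qchar1[OF sp k0 L(3) d2(4) ru] L by blast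
  have "replicate k1 (u + (v2 - u) + 1) @ replicate ((k1 + k2) - k1) (u + (v2 - u)) @ r \<in> Nset (replicate (k1 + k2) u @ r)"
  proof -
    have "\<exists>w c. replicate k1 (u + (v2 - u) + 1) @ replicate ((k1 + k2) - k1) (u + (v2 - u)) @ r
       = replicate c (u + w + 1) @ replicate (k1 + k2 - c) (u + w) @ r \<and> 0 < c \<and> c < k1 + k2"
      using d(1) d2(1) by (intro exI[of _ "v2 - u"] exI[of _ k1]) simp
    thus ?thesis unfolding Nset_rep[OF k0 L(3) d2(4) ru] by (simp only: mem_Collect_eq)
  qed
  moreover have h1: "u + (v2 - u) = v2" using L(2) by simp
  moreover have h2: "(k1 + k2) - k1 = k2" by simp
  moreover have h3: "v2 + 1 = v1" using c(1) by simp
  moreover have "\<beta> = replicate k1 v1 @ replicate k2 v2 @ r" by (simp only: d(3) d2(3))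
  ultimately have "\<beta> \<in> Nset (replicate (k1 + k2) u @ r)" by (simp only:)
  thus ?thesis using a d(1) d2(1,5) v12 \<open>\<beta> = replicate k1 v1 @ replicate k2 v2 @ r\<close> unfolding u_def
    by (intro exI[of _ k1] exI[of _ v1] exI[of _ k2] exI[of _ v2] exI[of _ r]) simp
qed

lemma part0:
  assumes sp: "strict_partition (m # \<nu>)"
  shows "MS (Q (m # \<nu>) (Suc m # \<nu>)) = Q (m # \<nu>) (Suc m # m # \<nu>)"
proof (intro set_eqI iffI)
  fix \<beta> assume "\<beta> \<in> MS (Q (m # \<nu>) (Suc m # \<nu>))"
  then obtain \<alpha> where a: "\<alpha> \<in> Q (m # \<nu>) (Suc m # \<nu>)" "\<beta> \<in> Mset \<alpha>" unfolding MS_def by blast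
  obtain k v r where d: "0 < k" "0 < v" "\<alpha> = replicate k v @ r" "is_partition r" "\<forall>y\<in>set r. y < v"
    "ch (set r) \<nu> v m" "\<forall>y\<in>set r. \<not> ch (set r) \<nu> y m"
    using QA_elim[OF sp a(1)] by blast
  have "\<beta> \<in> Mset (replicate k v @ r)" using a(2) d(3) by (simp only:)
  then obtain w where w: "\<beta> = replicate k (v + w) @ r" using Mset_rep[OF d(1,2,4,5)] by blast
  have r2: "\<forall>y\<in>set r. y < v + w" using d(5) by fastforce
  have "ch (set r) \<nu> (v + w) m" using ch_mono[OF d(6)] by simp
  hence "replicate k (v + w) @ r \<in> Q (m # \<nu>) (Suc m # m # \<nu>)"
    using Qchar2[OF sp d(1) _ d(4) r2] d(2,7) by simp
  thus "\<beta> \<in> Q (m # \<nu>) (Suc m # m # \<nu>)" using w by (simp only:)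
next
  fix \<beta> assume "\<beta> \<in> Q (m # \<nu>) (Suc m # m # \<nu>)"
  thus "\<beta> \<in> MS (Q (m # \<nu>) (Suc m # \<nu>))" using QM_exists[OF sp] unfolding MS_def by blast
qed

lemma part1:
  assumes sp: "strict_partition (m # \<nu>)"
  shows "NS (Q (m # \<nu>) (Suc m # \<nu>)) = Q (Suc m # m # \<nu>) (Suc (Suc m) # m # \<nu>)"
proof (intro set_eqI iffI)
  fix \<beta> assume "\<beta> \<in> NS (Q (m # \<nu>) (Suc m # \<nu>))"
  then obtain \<alpha> where a: "\<alpha> \<in> Q (m # \<nu>) (Suc m # \<nu>)" "\<beta> \<in> Nset \<alpha>" unfolding NS_def by blast
  obtain k v r where d: "0 < k" "0 < v" "\<alpha> = replicate k v @ r" "is_partition r" "\<forall>y\<in>set r. y < v"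
    "ch (set r) \<nu> v m" "\<forall>y\<in>set r. \<not> ch (set r) \<nu> y m"
    using QA_elim[OF sp a(1)] by blast
  have "\<beta> \<in> Nset (replicate k v @ r)" using a(2) d(3) by (simp only:)
  then obtain w c where w: "\<beta> = replicate c (v + w + 1) @ replicate (k - c) (v + w) @ r" "0 < c" "c < k"
    using Nset_rep[OF d(1,2,4,5)] by blast
  have r2: "\<forall>y\<in>set r. y < v + w" using d(5) by fastforce
  have "ch (set r) \<nu> (v + w) m" using ch_mono[OF d(6)] by simp
  moreover have "0 < k - c" "0 < v + w" "v + w < v + w + 1" using w d(2) by auto
  ultimately have "replicate c (v + w + 1) @ replicate (k - c) (v + w) @ r \<in> Q (Suc m # m # \<nu>) (Suc (Suc m) # m # \<nu>)"
    using Qchar3[OF sp w(2) _ _ _ d(4) r2] d(7) by simp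
  thus "\<beta> \<in> Q (Suc m # m # \<nu>) (Suc (Suc m) # m # \<nu>)" using w(1) by (simp only:)
next
  fix \<beta> assume "\<beta> \<in> Q (Suc m # m # \<nu>) (Suc (Suc m) # m # \<nu>)"
  thus "\<beta> \<in> NS (Q (m # \<nu>) (Suc m # \<nu>))" using QN_exists[OF sp] unfolding NS_def by blast
qed

lemma part2:
  assumes sp: "strict_partition (m # \<nu>)"
  shows "\<forall>\<beta>\<in>Q (m # \<nu>) (Suc m # m # \<nu>). \<exists>!\<alpha>. \<alpha> \<in> Q (m # \<nu>) (Suc m # \<nu>) \<and> \<beta> \<in> Mset \<alpha>"
proof
  fix \<beta> assume "\<beta> \<in> Q (m # \<nu>) (Suc m # m # \<nu>)"
  from QM_exists[OF sp this] obtain k v r where e: "\<beta> = replicate k v @ r" "0 < k" "\<forall>y\<in>set r. y < v"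
    "replicate k (LEAST x. ch (set r) \<nu> x m) @ r \<in> Q (m # \<nu>) (Suc m # \<nu>)"
    "\<beta> \<in> Mset (replicate k (LEAST x. ch (set r) \<nu> x m) @ r)" by blast
  show "\<exists>!\<alpha>. \<alpha> \<in> Q (m # \<nu>) (Suc m # \<nu>) \<and> \<beta> \<in> Mset \<alpha>"
  proof (rule ex1I[of _ "replicate k (LEAST x. ch (set r) \<nu> x m) @ r"])
    show "replicate k (LEAST x. ch (set r) \<nu> x m) @ r \<in> Q (m # \<nu>) (Suc m # \<nu>) \<and>
      \<beta> \<in> Mset (replicate k (LEAST x. ch (set r) \<nu> x m) @ r)" using e by blast
  next
    fix \<alpha> assume "\<alpha> \<in> Q (m # \<nu>) (Suc m # \<nu>) \<and> \<beta> \<in> Mset \<alpha>"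
    thus "\<alpha> = replicate k (LEAST x. ch (set r) \<nu> x m) @ r" using QA_uniqM[OF sp _ _ e(1-3)] by blast
  qed
qed

lemma part3:
  assumes sp: "strict_partition (m # \<nu>)"
  shows "\<forall>\<beta>\<in>Q (Suc m # m # \<nu>) (Suc (Suc m) # m # \<nu>). \<exists>!\<alpha>. \<alpha> \<in> Q (m # \<nu>) (Suc m # \<nu>) \<and> \<beta> \<in> Nset \<alpha>"
proof
  fix \<beta> assume "\<beta> \<in> Q (Suc m # m # \<nu>) (Suc (Suc m) # m # \<nu>)"
  from QN_exists[OF sp this] obtain k1 v1 k2 v2 r where e: "\<beta> = replicate k1 v1 @ replicate k2 v2 @ r"
    "0 < k1" "0 < k2" "v2 < v1" "\<forall>y\<in>set r. y < v2"
    "replicate (k1 + k2) (LEAST x. ch (set r) \<nu> x m) @ r \<in> Q (m # \<nu>) (Suc m # \<nu>)"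
    "\<beta> \<in> Nset (replicate (k1 + k2) (LEAST x. ch (set r) \<nu> x m) @ r)" by blast
  show "\<exists>!\<alpha>. \<alpha> \<in> Q (m # \<nu>) (Suc m # \<nu>) \<and> \<beta> \<in> Nset \<alpha>"
  proof (rule ex1I[of _ "replicate (k1 + k2) (LEAST x. ch (set r) \<nu> x m) @ r"])
    show "replicate (k1 + k2) (LEAST x. ch (set r) \<nu> x m) @ r \<in> Q (m # \<nu>) (Suc m # \<nu>) \<and>
      \<beta> \<in> Nset (replicate (k1 + k2) (LEAST x. ch (set r) \<nu> x m) @ r)" using e by blast
  next
    fix \<alpha> assume "\<alpha> \<in> Q (m # \<nu>) (Suc m # \<nu>) \<and> \<beta> \<in> Nset \<alpha>"
    thus "\<alpha> = replicate (k1 + k2) (LEAST x. ch (set r) \<nu> x m) @ r" using QA_uniqN[OF sp _ _ e(1-5)] by blast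
  qed
qed

theorem mainTheorem3:
  fixes \<mu> :: "nat list"
  assumes "strict_partition \<mu>" and "\<mu> \<noteq> []"
  shows "MS (Q \<mu> (padd \<mu> [1])) = Q \<mu> (pbar \<mu>)
       \<and> NS (Q \<mu> (padd \<mu> [1])) = Q (pbar \<mu>) (padd (pbar \<mu>) [1])
       \<and> (\<forall>\<beta>\<in>Q \<mu> (pbar \<mu>). \<exists>!\<alpha>. \<alpha> \<in> Q \<mu> (padd \<mu> [1]) \<and> \<beta> \<in> Mset \<alpha>)
       \<and> (\<forall>\<beta>\<in>Q (pbar \<mu>) (padd (pbar \<mu>) [1]). \<exists>!\<alpha>. \<alpha> \<in> Q \<mu> (padd \<mu> [1]) \<and> \<beta> \<in> Nset \<alpha>)"
proof -
  obtain m \<nu> where mu: "\<mu> = m # \<nu>" using assms(2) by (cases \<mu>) auto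
  have pos: "\<forall>x\<in>set \<nu>. 0 < x" "0 < m" using assms(1) unfolding mu strict_partition_def is_partition_def by auto
  have e1: "padd \<mu> [1] = Suc m # \<nu>" unfolding mu using pos_filter[OF pos(1)] by (simp add: padd_Cons padd_Nil2)
  have e2: "pbar \<mu> = Suc m # m # \<nu>" unfolding mu pbar_def using pos_filter[OF pos(1)] pos(2) by simp
  have e3: "padd (Suc m # m # \<nu>) [1] = Suc (Suc m) # m # \<nu>" using pos_filter[OF pos(1)] pos(2)
    by (simp add: padd_Cons padd_Nil2)
  show ?thesis unfolding e1 e2 e3 unfolding mu using assms(1)[unfolded mu]
    by (intro conjI part0 part1 part2 part3)
qed


end
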